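(* Let $X$ be a non-negative absolutely continuous random variable with CDF $F$ and PDF $f$, and let $T_1,T_2$ be the lifetimes of two coherent systems whose components are identically distributed as $X$, with distortion functions $q_1,q_2$, so that $T_i$ has CDF $F_{T_i}(x)=q_i(F(x))$ and PDF $f_{T_i}(x)=q_i'(F(x))f(x)$, $i=1,2$. Let $0<\alpha<\infty$, $\alpha\ne1$, $\beta>0$, put $\psi_{\alpha,i}(u)=f_{T_i}^\alpha(F_{T_i}^{-1}(u))$ for $0\le u\le1$, and $$\gamma_{1,\alpha}=\Big(\inf_{u\in(0,1)}\frac{\psi_{\alpha,2}(q_2(u))}{\psi_{\alpha,1}(q_1(u))}\Big)^{\beta-1},\qquad \gamma_{2,\alpha}=\Big(\sup_{u\in(0,1)}\frac{\psi_{\alpha,2}(q_2(u))}{\psi_{\alpha,1}(q_1(u))}\Big)^{\beta-1}.$$ Then (A) $\gamma_{1,\alpha}R^\alpha_\beta(T_1)\le R^\alpha_\beta(T_2)\le \gamma_{2,\alpha}R^\alpha_\beta(T_1)$ for $\{\alpha>1,\beta\le1\}$ or $\{0<\alpha<1,\beta\ge1\}$; (B) $\gamma_{1,\alpha}R^\alpha_\beta(T_1)\ge R^\alpha_\beta(T_2)\ge \gamma_{2,\alpha}R^\alpha_\beta(T_1)$ for $\{\alpha>1,\beta\ge1\}$ or $\{0<\alpha<1,\beta\le1\}$.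
   Context: For a non-negative absolutely continuous random variable $Z$ with PDF $h$, the Rényi information generating function is $R^\alpha_\beta(Z)=\frac{1}{1-\alpha}\left(\int_0^\infty h^\alpha(x)\,dx\right)^{\beta-1}$; all integrals are assumed finite and the infimum and supremum are assumed finite and positive. A distortion function is a continuous increasing (differentiable) function $q:[0,1]\to[0,1]$ with $q(0)=0$, $q(1)=1$. Quantile functions are $F^{-1}(u)=\inf\{x:F(x)\ge u\}$. *)

theory Defs
  imports "HOL-Analysis.Analysis"
begin

definition quantile :: "(real \<Rightarrow> real) \<Rightarrow> real \<Rightarrow> real" where
  "quantile G u = Inf {x. G x \<ge> u}"

definition renyi_igf :: "real \<Rightarrow> real \<Rightarrow> (real \<Rightarrow> real) \<Rightarrow> real" where
  "renyi_igf \<alpha> \<beta> h = (1 / (1 - \<alpha>)) * (LINT x:{0..}|lborel. h x powr \<alpha>) powr (\<beta> - 1)"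

definition distortion_fn :: "(real \<Rightarrow> real) \<Rightarrow> (real \<Rightarrow> real) \<Rightarrow> bool" where
  "distortion_fn q dq \<longleftrightarrow>
     continuous_on {0..1} q \<and> strict_mono_on {0..1} q \<and> q ` {0..1} \<subseteq> {0..1} \<and>
     q 0 = 0 \<and> q 1 = 1 \<and>
     (\<forall>u\<in>{0..1}. (q has_real_derivative dq u) (at u within {0..1}))"

end

theory Submission
  imports Defs "HOL-Probability.Probability"
begin


lemma cdf_helper:
  fixes f F :: "real \<Rightarrow> real"
  assumes f_meas: "f \<in> borel_measurable lborel"
    and f_nonneg: "\<And>x. f x \<ge> 0"
    and f_int: "integrable lborel f"
    and f_total: "(LINT x|lborel. f x) = 1"
    and F_def: "\<And>x. F x = (LINT t:{..x}|lborel. f t)"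
  shows "continuous_on UNIV F \<and> mono F \<and> (\<forall>x. 0 \<le> F x \<and> F x \<le> 1) \<and>
    (F \<longlongrightarrow> 0) at_bot \<and> (F \<longlongrightarrow> 1) at_top \<and>
    (AE x in lborel. 0 < f x \<longrightarrow> 0 < F x \<and> F x < 1)"
proof -
  define M where "M = density lborel (\<lambda>x. ennreal (f x))"
  have sM: "sets M = sets borel" by (simp add: M_def)
  have spM: "space M = UNIV" by (simp add: M_def)
  have [measurable]: "f \<in> borel_measurable borel" using f_meas by simp
  have emM: "emeasure M A = ennreal (LINT x:A|lborel. f x)" if "A \<in> sets borel" for A
  proof -
    have "emeasure M A = (\<integral>\<^sup>+ x. ennreal (f x) * indicator A x \<partial>lborel)"
      unfolding M_def using that by (subst emeasure_density) auto
    also have "\<dots> = (\<integral>\<^sup>+ x. ennreal (f x * indicator A x) \<partial>lborel)"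
      by (intro nn_integral_cong) (auto split: split_indicator)
    also have "\<dots> = ennreal (LINT x|lborel. f x * indicator A x)"
      using that f_nonneg
      by (intro nn_integral_eq_integral integrable_real_mult_indicator f_int) auto
    finally show ?thesis by (simp add: set_lebesgue_integral_def mult.commute)
  qed
  have setnn: "0 \<le> (LINT x:A|lborel. f x)" for A
    using f_nonneg by (simp add: set_lebesgue_integral_def integral_nonneg)
  have msM: "measure M A = (LINT x:A|lborel. f x)" if "A \<in> sets borel" for A
    using emM[OF that] setnn by (simp add: measure_def)
  have emU: "emeasure M (space M) = 1"
    using emM[of UNIV] f_total spM by (simp add: set_lebesgue_integral_def)
  interpret prob_space M by (rule prob_spaceI) (rule emU)
  interpret real_distribution M by unfold_locales (rule sM)
  have FM: "F = cdf M" 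
    by (rule ext) (simp add: cdf_def F_def msM)
  have pt: "measure M {x} = 0" for x
  proof -
    have "measure M {x} = (LINT t:{x}|lborel. f t)" by (simp add: msM)
    also have "\<dots> = (LINT t:{}|lborel. f t)"
    proof (rule set_integral_null_delta[OF f_int])
      show "({x} - {}) \<union> ({} - {x}) \<in> null_sets lborel"
        using finite_imp_null_set_lborel[of "{x}"] by simp
    qed auto
    also have "\<dots> = 0" by (simp add: set_lebesgue_integral_def)
    finally show ?thesis .
  qed
  have cont: "continuous_on UNIV F"
    unfolding FM using isCont_cdf pt by (simp add: continuous_on_eq_continuous_at)
  have mo: "mono F" unfolding FM by (simp add: mono_def cdf_nondecreasing)
  have bd: "\<forall>x. 0 \<le> F x \<and> F x \<le> 1" unfolding FM by (simp add: cdf_nonneg cdf_bounded_prob)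
  have lb: "(F \<longlongrightarrow> 0) at_bot" unfolding FM by (rule cdf_lim_at_bot)
  have lt: "(F \<longlongrightarrow> 1) at_top" unfolding FM by (rule cdf_lim_at_top_prob)
  have nullAE: "AE x in M. x \<notin> A" if "measure M A = 0" "A \<in> sets borel" for A
  proof (rule AE_not_in, rule null_setsI)
    show "emeasure M A = 0" using that by (simp add: emeasure_eq_measure)
  qed (use that sM in auto)
  have clo: "closed {x. F x \<le> c}" "closed {x. c \<le> F x}" for c
    using cont by (auto intro!: closed_Collect_le continuous_on_const)
  have ae0: "AE x in M. 0 < F x"
  proof (cases "{x. F x \<le> 0} = {}")
    case True then show ?thesis by (auto simp: not_le)
  next
    case False
    define A0 where "A0 = {x. F x \<le> 0}"
    have "eventually (\<lambda>x. F x > 1/2) at_top"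
      using lt by (rule order_tendstoD) simp
    then obtain b where b: "\<And>x. x \<ge> b \<Longrightarrow> F x > 1/2" by (auto simp: eventually_at_top_linorder)
    have bdd: "bdd_above A0" unfolding A0_def bdd_above_def
      proof (intro exI[of _ b] ballI)
      fix x assume "x \<in> {x. F x \<le> 0}" then show "x \<le> b" using b[of x] by (cases "x \<le> b") auto
    qed
    define a where "a = Sup A0"
    have "a \<in> A0" unfolding a_def using False bdd clo[of 0] A0_def
      by (intro closed_contains_Sup) auto
    then have Fa: "F a = 0" using bd A0_def by (auto intro: antisym)
    have sub: "A0 \<subseteq> {..a}" unfolding a_def using bdd by (auto intro: cSup_upper)
    have "measure M {..a} = 0" using Fa FM by (simp add: cdf_def)
    then have "AE x in M. x \<notin> {..a}" by (intro nullAE) auto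
    then show ?thesis
      by (rule eventually_mono) (use sub A0_def in \<open>force simp: not_le subset_eq\<close>)
  qed
  have ae1: "AE x in M. F x < 1"
  proof (cases "{x. 1 \<le> F x} = {}")
    case True then show ?thesis by (auto simp: not_le)
  next
    case False
    define A1 where "A1 = {x. 1 \<le> F x}"
    have "eventually (\<lambda>x. F x < 1/2) at_bot"
      using lb by (rule order_tendstoD) simp
    then obtain b where b: "\<And>x. x \<le> b \<Longrightarrow> F x < 1/2" by (auto simp: eventually_at_bot_linorder)
    have bdd: "bdd_below A1" unfolding A1_def bdd_below_def
      proof (intro exI[of _ b] ballI)
      fix x assume "x \<in> {x. 1 \<le> F x}" then show "b \<le> x" using b[of x] by (cases "x \<ge> b") auto
    qed
    define c where "c = Inf A1"
    have "c \<in> A1" unfolding c_def using False bdd clo[of 1] A1_def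
      by (intro closed_contains_Inf) auto
    then have Fc: "F c = 1" using bd A1_def by (auto intro: antisym)
    have sub: "A1 \<subseteq> {c} \<union> {c<..}" unfolding c_def proof
      fix x assume "x \<in> A1" then have "Inf A1 \<le> x" using bdd by (rule cInf_lower)
      then show "x \<in> {Inf A1} \<union> {Inf A1<..}" by auto
    qed
    have "measure M {c<..} = measure M (space M - {..c})" by (simp add: spM Compl_eq_Diff_UNIV[symmetric] Compl_atMost)
    also have "\<dots> = 1 - measure M {..c}" by (rule prob_compl) (simp add: sM)
    also have "\<dots> = 0" using Fc FM by (simp add: cdf_def)
    finally have "AE x in M. x \<notin> {c<..}" by (intro nullAE) auto
    moreover have "AE x in M. x \<notin> {c}" using pt FM by (intro nullAE) auto
    ultimately show ?thesis
      by eventually_elim (use sub A1_def in \<open>force simp: not_le subset_eq\<close>)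
  qed
  have "AE x in M. 0 < F x \<and> F x < 1" using ae0 ae1 by eventually_elim auto
  then have "AE x in lborel. 0 < f x \<longrightarrow> 0 < F x \<and> F x < 1"
    unfolding M_def by (subst (asm) AE_density) auto
  with cont mo bd lb lt show ?thesis by blast
qed


lemma alg_powr:
  fixes L U I1 I2 t :: real
  assumes L: "0 < L" and U: "0 < U" and I1: "0 \<le> I1" and lo: "L * I1 \<le> I2" and hi: "I2 \<le> U * I1"
  shows "t \<le> 0 \<Longrightarrow> I2 powr t \<le> L powr t * I1 powr t \<and> U powr t * I1 powr t \<le> I2 powr t"
    and "0 \<le> t \<Longrightarrow> L powr t * I1 powr t \<le> I2 powr t \<and> I2 powr t \<le> U powr t * I1 powr t"
proof -
  have cases: "(I1 = 0 \<and> I2 = 0) \<or> (0 < I1 \<and> 0 < L * I1)"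
  proof (cases "I1 = 0")
    case True then show ?thesis using lo hi by auto
  next
    case False then show ?thesis using I1 L by auto
  qed
  note pm = powr_mult[symmetric]
  show "t \<le> 0 \<Longrightarrow> I2 powr t \<le> L powr t * I1 powr t \<and> U powr t * I1 powr t \<le> I2 powr t"
    using cases
  proof
    assume "I1 = 0 \<and> I2 = 0" then show ?thesis by simp
  next
    assume t: "t \<le> 0" and p: "0 < I1 \<and> 0 < L * I1"
    show ?thesis unfolding pm
      using powr_mono2'[OF t _ lo] powr_mono2'[OF t _ hi] p lo by auto
  qed
  show "0 \<le> t \<Longrightarrow> L powr t * I1 powr t \<le> I2 powr t \<and> I2 powr t \<le> U powr t * I1 powr t"
    using cases
  proof
    assume "I1 = 0 \<and> I2 = 0" then show ?thesis by simp
  next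
    assume t: "0 \<le> t" and p: "0 < I1 \<and> 0 < L * I1"
    show ?thesis unfolding pm
      using powr_mono2[OF t _ lo] powr_mono2[OF t _ hi] p lo by auto
  qed
qed
lemma dq_nonneg:
  assumes "distortion_fn q dq" "u \<in> {0<..<1}"
  shows "0 \<le> dq u"
proof -
  have d: "(q has_real_derivative dq u) (at u within {0..1})" and sm: "strict_mono_on {0..1} q"
    using assms unfolding distortion_fn_def by auto
  have "u \<in> interior {0..1::real}" using assms(2) by simp
  then have e: "at u within {0..1} = at u" by (rule at_within_interior)
  have "(q has_real_derivative dq u) (at u)" using d unfolding e .
  then show ?thesis
    by (rule mono_on_imp_deriv_nonneg[OF strict_mono_on_imp_mono_on[OF sm]]) (use assms(2) in simp)
qed

lemma quant_eq:
  assumes "distortion_fn q dq" "\<And>y. 0 \<le> F y \<and> F y \<le> 1" "0 \<le> u" "u \<le> 1"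
  shows "quantile (\<lambda>x. q (F x)) (q u) = Inf {y. u \<le> F y}"
proof -
  have sm: "strict_mono_on {0..1} q" using assms unfolding distortion_fn_def by auto
  have "{x. q u \<le> q (F x)} = {y. u \<le> F y}"
  proof (rule Collect_cong)
    fix x
    have "u \<in> {0..1}" "F x \<in> {0..1}" using assms(2)[of x] assms(3,4) by auto
    then show "q u \<le> q (F x) \<longleftrightarrow> u \<le> F x" by (rule strict_mono_on_less_eq[OF sm])
  qed
  then show ?thesis by (simp add: quantile_def)
qed

lemma Finv_eq:
  fixes F :: "real \<Rightarrow> real"
  assumes cont: "continuous_on UNIV F" and mo: "mono F" and lb: "(F \<longlongrightarrow> 0) at_bot" and pos: "0 < F x"
  shows "F (Inf {y. F x \<le> F y}) = F x \<and> Inf {y. F x \<le> F y} \<le> x"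
proof -
  define S where "S = {y. F x \<le> F y}"
  have "eventually (\<lambda>y. F y < F x) at_bot" using lb pos by (rule order_tendstoD)
  then obtain b where b: "\<And>y. y \<le> b \<Longrightarrow> F y < F x" by (auto simp: eventually_at_bot_linorder)
  have bdd: "bdd_below S" unfolding S_def bdd_below_def
  proof (intro exI[of _ b] ballI)
    fix y assume "y \<in> {y. F x \<le> F y}" then show "b \<le> y" using b[of y] by (cases "y \<ge> b") auto
  qed
  have clo: "closed S" unfolding S_def using cont by (auto intro!: closed_Collect_le continuous_on_const)
  have xS: "x \<in> S" by (simp add: S_def)
  have "Inf S \<in> S" using closed_contains_Inf[OF _ bdd clo] xS by auto
  moreover have le: "Inf S \<le> x" using cInf_lower[OF xS bdd] .
  ultimately have a: "F x \<le> F (Inf S)" by (simp add: S_def)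
  have b: "F (Inf S) \<le> F x" using le mo by (rule monoD[rotated])
  from a b le show ?thesis unfolding S_def by simp
qed
lemma final_alg:
  fixes \<alpha> \<beta> L U I1 I2 :: real
  assumes L: "0 < L" and U: "0 < U" and I1: "0 \<le> I1" and lo: "L * I1 \<le> I2" and hi: "I2 \<le> U * I1"
    and a1: "\<alpha> \<noteq> 1"
  shows "(((\<alpha> > 1 \<and> \<beta> \<le> 1) \<or> (\<alpha> < 1 \<and> \<beta> \<ge> 1)) \<longrightarrow>
           L powr (\<beta> - 1) * (1 / (1 - \<alpha>) * I1 powr (\<beta> - 1)) \<le> 1 / (1 - \<alpha>) * I2 powr (\<beta> - 1) \<and>
           1 / (1 - \<alpha>) * I2 powr (\<beta> - 1) \<le> U powr (\<beta> - 1) * (1 / (1 - \<alpha>) * I1 powr (\<beta> - 1)))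
       \<and> (((\<alpha> > 1 \<and> \<beta> \<ge> 1) \<or> (\<alpha> < 1 \<and> \<beta> \<le> 1)) \<longrightarrow>
           L powr (\<beta> - 1) * (1 / (1 - \<alpha>) * I1 powr (\<beta> - 1)) \<ge> 1 / (1 - \<alpha>) * I2 powr (\<beta> - 1) \<and>
           1 / (1 - \<alpha>) * I2 powr (\<beta> - 1) \<ge> U powr (\<beta> - 1) * (1 / (1 - \<alpha>) * I1 powr (\<beta> - 1)))"
proof -
  define c where "c = 1 / (1 - \<alpha>)"
  define t where "t = \<beta> - 1"
  note A = alg_powr[OF L U I1 lo hi]
  have neg: "\<alpha> > 1 \<Longrightarrow> c < 0" and pos: "\<alpha> < 1 \<Longrightarrow> 0 < c" by (simp_all add: c_def)
  have sw: "X * (c * Y) = c * (X * Y)" for X Y :: real by (simp add: ac_simps)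
  have m1: "c * X \<le> c * Y" if "0 < c" "X \<le> Y" for X Y using that by (simp add: mult_left_mono)
  have m2: "c * Y \<le> c * X" if "c < 0" "X \<le> Y" for X Y using that by (simp add: mult_left_mono_neg)
  show ?thesis
    unfolding c_def[symmetric] t_def[symmetric] sw
  proof (intro conjI impI)
    assume "1 < \<alpha> \<and> \<beta> \<le> 1 \<or> \<alpha> < 1 \<and> 1 \<le> \<beta>"
    then show "c * (L powr t * I1 powr t) \<le> c * I2 powr t"
    proof
      assume h: "1 < \<alpha> \<and> \<beta> \<le> 1"
      then have "t \<le> 0" by (auto simp: t_def)
      then show ?thesis using h A(1) neg pos by (intro m2) auto
    next
      assume h: "\<alpha> < 1 \<and> 1 \<le> \<beta>"
      then have "0 \<le> t" by (auto simp: t_def)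
      then show ?thesis using h A(2) neg pos by (intro m1) auto
    qed
  next
    assume "1 < \<alpha> \<and> \<beta> \<le> 1 \<or> \<alpha> < 1 \<and> 1 \<le> \<beta>"
    then show "c * I2 powr t \<le> c * (U powr t * I1 powr t)"
    proof
      assume h: "1 < \<alpha> \<and> \<beta> \<le> 1"
      then have "t \<le> 0" by (auto simp: t_def)
      then show ?thesis using h A(1) neg pos by (intro m2) auto
    next
      assume h: "\<alpha> < 1 \<and> 1 \<le> \<beta>"
      then have "0 \<le> t" by (auto simp: t_def)
      then show ?thesis using h A(2) neg pos by (intro m1) auto
    qed
  next
    assume "1 < \<alpha> \<and> 1 \<le> \<beta> \<or> \<alpha> < 1 \<and> \<beta> \<le> 1"
    then show "c * I2 powr t \<le> c * (L powr t * I1 powr t)"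
    proof
      assume h: "1 < \<alpha> \<and> 1 \<le> \<beta>"
      then have "0 \<le> t" by (auto simp: t_def)
      then show ?thesis using h A(2) neg pos by (intro m2) auto
    next
      assume h: "\<alpha> < 1 \<and> \<beta> \<le> 1"
      then have "t \<le> 0" by (auto simp: t_def)
      then show ?thesis using h A(1) neg pos by (intro m1) auto
    qed
  next
    assume "1 < \<alpha> \<and> 1 \<le> \<beta> \<or> \<alpha> < 1 \<and> \<beta> \<le> 1"
    then show "c * (U powr t * I1 powr t) \<le> c * I2 powr t"
    proof
      assume h: "1 < \<alpha> \<and> 1 \<le> \<beta>"
      then have "0 \<le> t" by (auto simp: t_def)
      then show ?thesis using h A(2) neg pos by (intro m2) auto
    next
      assume h: "\<alpha> < 1 \<and> \<beta> \<le> 1"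
      then have "t \<le> 0" by (auto simp: t_def)
      then show ?thesis using h A(1) neg pos by (intro m1) auto
    qed
  qed
qed

theorem proposition6p4:
  fixes f F :: "real \<Rightarrow> real"
    and q1 q2 dq1 dq2 :: "real \<Rightarrow> real"
    and \<alpha> \<beta> :: real
  defines "FT1 \<equiv> (\<lambda>x. q1 (F x))" and "FT2 \<equiv> (\<lambda>x. q2 (F x))"
    and "fT1 \<equiv> (\<lambda>x. dq1 (F x) * f x)" and "fT2 \<equiv> (\<lambda>x. dq2 (F x) * f x)"
  defines "\<psi>1 \<equiv> (\<lambda>u. fT1 (quantile FT1 u) powr \<alpha>)"
    and "\<psi>2 \<equiv> (\<lambda>u. fT2 (quantile FT2 u) powr \<alpha>)"
  defines "ratio \<equiv> (\<lambda>u. \<psi>2 (q2 u) / \<psi>1 (q1 u))"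
  defines "\<gamma>1 \<equiv> (INF u\<in>{0<..<1}. ratio u) powr (\<beta> - 1)"
    and "\<gamma>2 \<equiv> (SUP u\<in>{0<..<1}. ratio u) powr (\<beta> - 1)"
  assumes f_meas: "f \<in> borel_measurable lborel"
    and f_nonneg: "\<And>x. f x \<ge> 0"
    and f_supp: "\<And>x. x < 0 \<Longrightarrow> f x = 0"
    and f_int: "integrable lborel f"
    and f_total: "(LINT x|lborel. f x) = 1"
    and F_def: "\<And>x. F x = (LINT t:{..x}|lborel. f t)"
    and q1: "distortion_fn q1 dq1" and q2: "distortion_fn q2 dq2"
    and \<alpha>_pos: "0 < \<alpha>" and \<alpha>_ne1: "\<alpha> \<noteq> 1" and \<beta>_pos: "0 < \<beta>"
    and int1: "set_integrable lborel {0..} (\<lambda>x. fT1 x powr \<alpha>)"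
    and int2: "set_integrable lborel {0..} (\<lambda>x. fT2 x powr \<alpha>)"
    and bdd_below: "bdd_below (ratio ` {0<..<1})"
    and bdd_above: "bdd_above (ratio ` {0<..<1})"
    and inf_pos: "(INF u\<in>{0<..<1}. ratio u) > 0"
    and sup_pos: "(SUP u\<in>{0<..<1}. ratio u) > 0"
  shows "(((\<alpha> > 1 \<and> \<beta> \<le> 1) \<or> (\<alpha> < 1 \<and> \<beta> \<ge> 1)) \<longrightarrow>
           \<gamma>1 * renyi_igf \<alpha> \<beta> fT1 \<le> renyi_igf \<alpha> \<beta> fT2 \<and>
           renyi_igf \<alpha> \<beta> fT2 \<le> \<gamma>2 * renyi_igf \<alpha> \<beta> fT1)
       \<and> (((\<alpha> > 1 \<and> \<beta> \<ge> 1) \<or> (\<alpha> < 1 \<and> \<beta> \<le> 1)) \<longrightarrow>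
           \<gamma>1 * renyi_igf \<alpha> \<beta> fT1 \<ge> renyi_igf \<alpha> \<beta> fT2 \<and>
           renyi_igf \<alpha> \<beta> fT2 \<ge> \<gamma>2 * renyi_igf \<alpha> \<beta> fT1)"
proof -
  have cdf: "continuous_on UNIV F \<and> mono F \<and> (\<forall>x. 0 \<le> F x \<and> F x \<le> 1) \<and>
    (F \<longlongrightarrow> 0) at_bot \<and> (F \<longlongrightarrow> 1) at_top \<and>
    (AE x in lborel. 0 < f x \<longrightarrow> 0 < F x \<and> F x < 1)"
    by (rule cdf_helper[OF f_meas f_nonneg f_int f_total F_def])
  then have cont: "continuous_on UNIV F" and mo: "mono F" and bd: "\<And>x. 0 \<le> F x \<and> F x \<le> 1"
    and lb: "(F \<longlongrightarrow> 0) at_bot" and aeF: "AE x in lborel. 0 < f x \<longrightarrow> 0 < F x \<and> F x < 1"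
    by auto
  define L where "L = (INF u\<in>{0<..<1}. ratio u)"
  define U where "U = (SUP u\<in>{0<..<1}. ratio u)"
  define I1 where "I1 = (LINT x:{0..}|lborel. fT1 x powr \<alpha>)"
  define I2 where "I2 = (LINT x:{0..}|lborel. fT2 x powr \<alpha>)"
  have Lpos: "0 < L" and Upos: "0 < U" using inf_pos sup_pos by (simp_all add: L_def U_def)
  have pw: "L * fT1 x powr \<alpha> \<le> fT2 x powr \<alpha> \<and> fT2 x powr \<alpha> \<le> U * fT1 x powr \<alpha>"
    if Fx: "0 < F x" "F x < 1" for x
  proof -
    define u where "u = F x"
    have u: "u \<in> {0<..<1}" using Fx by (simp add: u_def)
    define m where "m = Inf {y. u \<le> F y}"
    have Fm: "F m = u" using Finv_eq[OF cont mo lb Fx(1)] by (simp add: m_def u_def)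
    have qt1: "quantile FT1 (q1 u) = m" unfolding FT1_def m_def
      by (rule quant_eq[OF q1 bd]) (use u in auto)
    have qt2: "quantile FT2 (q2 u) = m" unfolding FT2_def m_def
      by (rule quant_eq[OF q2 bd]) (use u in auto)
    have r: "ratio u = (dq2 u * f m) powr \<alpha> / (dq1 u * f m) powr \<alpha>"
      by (simp add: ratio_def \<psi>1_def \<psi>2_def qt1 qt2 fT1_def fT2_def Fm)
    have Lr: "L \<le> ratio u" unfolding L_def by (rule cINF_lower[OF bdd_below u])
    have rU: "ratio u \<le> U" unfolding U_def by (rule cSUP_upper[OF u bdd_above])
    have rpos: "0 < ratio u" using Lr Lpos by simp
    then have "(dq1 u * f m) powr \<alpha> \<noteq> 0" using r by auto
    then have d1: "dq1 u powr \<alpha> \<noteq> 0" and fm: "f m powr \<alpha> \<noteq> 0" by (auto simp: powr_mult)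
    have r2: "ratio u = dq2 u powr \<alpha> / dq1 u powr \<alpha>"
      using r fm by (simp add: powr_mult)
    have r3: "dq2 u powr \<alpha> = ratio u * dq1 u powr \<alpha>" using r2 d1 by simp
    have e: "fT2 x powr \<alpha> = ratio u * fT1 x powr \<alpha>"
      unfolding fT1_def fT2_def u_def[symmetric] powr_mult r3 by simp
    have nn: "0 \<le> fT1 x powr \<alpha>" by simp
    show ?thesis unfolding e using Lr rU nn by (simp add: mult_right_mono)
  qed
  have ae: "AE x in lborel. L * fT1 x powr \<alpha> \<le> fT2 x powr \<alpha> \<and> fT2 x powr \<alpha> \<le> U * fT1 x powr \<alpha>"
    using aeF
  proof eventually_elim
    case (elim x)
    show ?case
    proof (cases "f x = 0")
      case True then show ?thesis by (simp add: fT1_def fT2_def)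
    next
      case False then have "0 < f x" using f_nonneg[of x] by simp
      then show ?thesis using elim pw by auto
    qed
  qed
  have lo: "L * I1 \<le> I2"
  proof -
    have "L * I1 = (LINT x:{0..}|lborel. L * fT1 x powr \<alpha>)" by (simp add: I1_def)
    also have "\<dots> \<le> I2" unfolding I2_def
    proof (rule set_integral_mono_AE)
      show "set_integrable lborel {0..} (\<lambda>x. L * fT1 x powr \<alpha>)"
        by (rule set_integrable_mult_right) (rule int1)
      show "AE x\<in>{0..} in lborel. L * fT1 x powr \<alpha> \<le> fT2 x powr \<alpha>"
        using ae by (rule eventually_mono) blast
    qed (rule int2)
    finally show ?thesis .
  qed
  have hi: "I2 \<le> U * I1"
  proof -
    have "I2 \<le> (LINT x:{0..}|lborel. U * fT1 x powr \<alpha>)" unfolding I2_def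
    proof (rule set_integral_mono_AE)
      show "set_integrable lborel {0..} (\<lambda>x. U * fT1 x powr \<alpha>)"
        by (rule set_integrable_mult_right) (rule int1)
      show "AE x\<in>{0..} in lborel. fT2 x powr \<alpha> \<le> U * fT1 x powr \<alpha>"
        using ae by (rule eventually_mono) blast
    qed (rule int2)
    also have "\<dots> = U * I1" by (simp add: I1_def)
    finally show ?thesis .
  qed
  have I1nn: "0 \<le> I1" unfolding I1_def set_lebesgue_integral_def
    by (rule Bochner_Integration.integral_nonneg) (simp add: indicator_def)
  have R1: "renyi_igf \<alpha> \<beta> fT1 = (1 / (1 - \<alpha>)) * I1 powr (\<beta> - 1)" by (simp add: renyi_igf_def I1_def)
  have R2: "renyi_igf \<alpha> \<beta> fT2 = (1 / (1 - \<alpha>)) * I2 powr (\<beta> - 1)" by (simp add: renyi_igf_def I2_def)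
  have g1: "\<gamma>1 = L powr (\<beta> - 1)" and g2: "\<gamma>2 = U powr (\<beta> - 1)" by (simp_all add: \<gamma>1_def \<gamma>2_def L_def U_def)
  note A = alg_powr[OF Lpos Upos I1nn lo hi]
  show ?thesis
    using final_alg[OF Lpos Upos I1nn lo hi \<alpha>_ne1, of \<beta>] unfolding R1 R2 g1 g2 by blast
qed

end
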